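(* Let $(\Omega,T)$ be a minimal subshift over a finite alphabet such that no word in $L_5(\Omega)$ has repeated letters. Then for every $w,v\in L(\Omega)$, every $i,j\in\mathbb Z$ and every cylinder partition $C$ of $(w,i)$, the following hold in $G_T'$: $$\left(\sigma_{(w,i)}\right)^3=1,\qquad \left(\sigma_{(w,i)}\,\sigma_{(w,i+1)}\right)^2=1,\qquad \sigma_{(w,i+1)}=\sigma_{(w,i)}\ast\sigma_{(w,i+2)},\qquad \sigma_{(w,i)}=\prod_{(s,k)\in C}\sigma_{(s,k)},$$ and $[\sigma_{(w,i)},\sigma_{(v,j)}]=1$ whenever $(w,i)$ and $(v,j)$ are $3$-disjoint.
   Context: $T$ is the left shift $(T\omega)_m=\omega_{m+1}$ on $A^{\mathbb Z}$, $A$ finite; a minimal subshift is a closed shift-invariant $\Omega\subseteq A^{\mathbb Z}$ with every orbit dense. Words are indexed from $0$; $L_m(\Omega)$ is the set of words of length $m$ occurring in sequences of $\Omega$, $L(\Omega)=\bigcup_mL_m(\Omega)$. For a word $v$ and $i\in\mathbb Z$, $(v,i)=\{\omega\in\Omega:\omega_{k-i}=v_k,\ 0\leq k\leq|v|-1\}$. A cylinder partition of $(w,i)$ is a finite family of cylinder sets $(s,k)$ that are pairwise disjoint with union $(w,i)$. For a clopen $U$ with $U,TU,T^2U$ pairwise disjoint, $\sigma_U(\omega)=T\omega$ on $U\cup TU$, $\sigma_U(\omega)=T^{-2}\omega$ on $T^2U$, $\sigma_U(\omega)=\omega$ elsewhere; $\sigma_{(w,i)}:=\sigma_U$ with $U=(w,i)$.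 $G_T$ is the group of homeomorphisms $S$ of $\Omega$ with $S(x)=T^{f_S(x)}x$ for a continuous $f_S:\Omega\to\mathbb Z$, and $G_T'$ its commutator subgroup (which contains all $\sigma_U$). For group elements $r,s$, $r\ast s:=s\,r^{-1}s^{-1}r$. Clopen sets $U,V$ are $3$-disjoint if $(U\cup TU\cup T^2U)\cap(V\cup TV\cup T^2V)=\emptyset$. *)

theory Defs
  imports "HOL-Analysis.Analysis"
begin

definition fullshift_top :: "(int \<Rightarrow> 'a) topology" where
  "fullshift_top = product_topology (\<lambda>_. discrete_topology UNIV) UNIV"

definition shift :: "(int \<Rightarrow> 'a) \<Rightarrow> (int \<Rightarrow> 'a)" where
  "shift \<omega> = (\<lambda>m. \<omega> (m + 1))"

definition shiftpow :: "int \<Rightarrow> (int \<Rightarrow> 'a) \<Rightarrow> (int \<Rightarrow> 'a)" where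
  "shiftpow n \<omega> = (\<lambda>m. \<omega> (m + n))"

definition minimal_subshift :: "(int \<Rightarrow> 'a::finite) set \<Rightarrow> bool" where
  "minimal_subshift \<Omega> \<longleftrightarrow>
     \<Omega> \<noteq> {} \<and> closedin fullshift_top \<Omega> \<and> shift ` \<Omega> = \<Omega> \<and>
     (\<forall>x\<in>\<Omega>. fullshift_top closure_of (range (\<lambda>n. shiftpow n x)) = \<Omega>)"

definition lang :: "(int \<Rightarrow> 'a) set \<Rightarrow> 'a list set" where
  "lang \<Omega> = {v. \<exists>\<omega>\<in>\<Omega>. \<exists>n::int. \<forall>k<length v. \<omega> (n + int k) = v ! k}"

definition lang_n :: "(int \<Rightarrow> 'a) set \<Rightarrow> nat \<Rightarrow> 'a list set" where
  "lang_n \<Omega> m = {v \<in> lang \<Omega>. length v = m}"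

definition cyl :: "(int \<Rightarrow> 'a) set \<Rightarrow> 'a list \<Rightarrow> int \<Rightarrow> (int \<Rightarrow> 'a) set" where
  "cyl \<Omega> v i = {\<omega>\<in>\<Omega>. \<forall>k<length v. \<omega> (int k - i) = v ! k}"

definition cylinder_partition ::
  "(int \<Rightarrow> 'a) set \<Rightarrow> ('a list \<times> int) list \<Rightarrow> 'a list \<Rightarrow> int \<Rightarrow> bool" where
  "cylinder_partition \<Omega> C w i \<longleftrightarrow>
     (\<forall>p<length C. \<forall>q<length C. p \<noteq> q \<longrightarrow>
        cyl \<Omega> (fst (C!p)) (snd (C!p)) \<inter> cyl \<Omega> (fst (C!q)) (snd (C!q)) = {}) \<and>
     (\<Union>c\<in>set C. cyl \<Omega> (fst c) (snd c)) = cyl \<Omega> w i"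

definition sigma :: "(int \<Rightarrow> 'a) set \<Rightarrow> (int \<Rightarrow> 'a) \<Rightarrow> (int \<Rightarrow> 'a)" where
  "sigma U \<omega> =
     (if \<omega> \<in> U \<union> shift ` U then shift \<omega>
      else if \<omega> \<in> shift ` shift ` U then shiftpow (-2) \<omega>
      else \<omega>)"

definition sigma_cyl :: "(int \<Rightarrow> 'a) set \<Rightarrow> 'a list \<Rightarrow> int \<Rightarrow> (int \<Rightarrow> 'a) \<Rightarrow> (int \<Rightarrow> 'a)" where
  "sigma_cyl \<Omega> w i = sigma (cyl \<Omega> w i)"

definition three_disjoint :: "(int \<Rightarrow> 'a) set \<Rightarrow> (int \<Rightarrow> 'a) set \<Rightarrow> bool" where
  "three_disjoint U V \<longleftrightarrow>
     (U \<union> shift ` U \<union> shift ` shift ` U) \<inter> (V \<union> shift ` V \<union> shift ` shift ` V) = {}"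

definition commutator :: "('b \<Rightarrow> 'b) \<Rightarrow> ('b \<Rightarrow> 'b) \<Rightarrow> ('b \<Rightarrow> 'b)" where
  "commutator r s = r \<circ> s \<circ> inv r \<circ> inv s"

definition star :: "('b \<Rightarrow> 'b) \<Rightarrow> ('b \<Rightarrow> 'b) \<Rightarrow> ('b \<Rightarrow> 'b)" where
  "star r s = s \<circ> inv r \<circ> inv s \<circ> r"

end

theory Submission imports Defs begin

abbreviation sp where "sp \<equiv> shiftpow"

lemma sp_sp[simp]: "shiftpow a (shiftpow b \<omega>) = shiftpow (a + b) \<omega>"
  by (simp add: shiftpow_def ac_simps)
lemma sp0: "shiftpow 0 \<omega> = \<omega>" by (simp add: shiftpow_def)
lemma shift_sp: "shift = shiftpow 1" by (simp add: fun_eq_iff shift_def shiftpow_def)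

lemma mem_shift_img: "\<omega> \<in> shift ` U \<longleftrightarrow> shiftpow (-1) \<omega> \<in> U"
proof
  assume "\<omega> \<in> shift ` U" then obtain \<eta> where "\<eta> \<in> U" "\<omega> = shift \<eta>" by auto
  then show "shiftpow (-1) \<omega> \<in> U" by (simp add: shift_sp sp0)
next
  assume "shiftpow (-1) \<omega> \<in> U"
  moreover have "\<omega> = shift (shiftpow (-1) \<omega>)" by (simp add: shift_sp sp0)
  ultimately show "\<omega> \<in> shift ` U" by blast
qed

lemma mem_shift2: "\<omega> \<in> shift ` shift ` U \<longleftrightarrow> shiftpow (-2) \<omega> \<in> U"
  by (simp add: mem_shift_img)

lemma sigma_sp: "sigma U (shiftpow n \<omega>) =
  (if shiftpow n \<omega> \<in> U \<or> shiftpow (n - 1) \<omega> \<in> U then shiftpow (n+1) \<omega>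
   else if shiftpow (n - 2) \<omega> \<in> U then shiftpow (n - 2) \<omega> else shiftpow n \<omega>)"
  unfolding sigma_def Un_iff mem_shift2 mem_shift_img unfolding shift_sp sp_sp by (simp add: algebra_simps)

definition sep :: "int \<Rightarrow> (int \<Rightarrow> 'a) set \<Rightarrow> bool" where
  "sep n U \<longleftrightarrow> (\<forall>a b \<omega>. shiftpow a \<omega> \<in> U \<longrightarrow> shiftpow b \<omega> \<in> U \<longrightarrow> a = b \<or> n < \<bar>a - b\<bar>)"

lemma sepD: assumes "sep n U" "shiftpow a \<omega> \<in> U" "a \<noteq> b" "\<bar>a - b\<bar> \<le> n"
  shows "shiftpow b \<omega> \<notin> U"
proof
  assume "shiftpow b \<omega> \<in> U"
  then have "a = b \<or> n < \<bar>a - b\<bar>" using assms(1,2) unfolding sep_def by blast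
  then show False using assms(3,4) by linarith
qed

lemma sep_shift: assumes "sep n U" shows "sep n {\<omega>. shiftpow c \<omega> \<in> U}"
  unfolding sep_def
proof (intro allI impI)
  fix a b \<omega> assume "sp a \<omega> \<in> {\<omega>. sp c \<omega> \<in> U}" "sp b \<omega> \<in> {\<omega>. sp c \<omega> \<in> U}"
  then have "sp (c + a) \<omega> \<in> U" "sp (c + b) \<omega> \<in> U" by auto
  then have "c + a = c + b \<or> n < \<bar>(c + a) - (c + b)\<bar>" using assms unfolding sep_def by blast
  then show "a = b \<or> n < \<bar>a - b\<bar>" by auto
qed

lemma sep_mono: "sep n U \<Longrightarrow> V \<subseteq> U \<Longrightarrow> sep n V"
  unfolding sep_def by (meson subsetD)

lemma cube: assumes "sep 2 U" shows "sigma U \<circ> sigma U \<circ> sigma U = id"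
proof
  fix \<omega> :: "int \<Rightarrow> 'a"
  have K: "\<And>a b. shiftpow a \<omega> \<in> U \<Longrightarrow> a \<noteq> b \<Longrightarrow> \<bar>a - b\<bar> \<le> 2 \<Longrightarrow> shiftpow b \<omega> \<notin> U"
    using sepD[OF assms] by blast
  have "(sigma U \<circ> sigma U \<circ> sigma U) (sp 0 \<omega>) = sp 0 \<omega>"
  proof -
    consider "sp 0 \<omega> \<in> U" | "sp (-1) \<omega> \<in> U" | "sp (-2) \<omega> \<in> U"
      | "sp 0 \<omega> \<notin> U" "sp (-1) \<omega> \<notin> U" "sp (-2) \<omega> \<notin> U" by blast
    then show ?thesis
    proof cases
      case 1 then show ?thesis by (simp add: sigma_sp K[OF 1])
    next
      case 2 then show ?thesis by (simp add: sigma_sp K[OF 2])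
    next
      case 3 then show ?thesis by (simp add: sigma_sp K[OF 3])
    next
      case 4 then show ?thesis by (simp add: sigma_sp)
    qed
  qed
  then show "(sigma U \<circ> sigma U \<circ> sigma U) \<omega> = id \<omega>" by (simp add: sp0)
qed

lemma sq: assumes "sep 4 U"
  shows "(sigma U \<circ> sigma {\<omega>. sp (-1) \<omega> \<in> U}) \<circ> (sigma U \<circ> sigma {\<omega>. sp (-1) \<omega> \<in> U}) = id"
proof
  fix \<omega> :: "int \<Rightarrow> 'a"
  have K: "\<And>a b. shiftpow a \<omega> \<in> U \<Longrightarrow> a \<noteq> b \<Longrightarrow> \<bar>a - b\<bar> \<le> 4 \<Longrightarrow> shiftpow b \<omega> \<notin> U"
    using sepD[OF assms] by blast
  have "((sigma U \<circ> sigma {\<omega>. sp (-1) \<omega> \<in> U}) \<circ> (sigma U \<circ> sigma {\<omega>. sp (-1) \<omega> \<in> U})) (sp 0 \<omega>) = sp 0 \<omega>"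
  proof -
    consider "sp 0 \<omega> \<in> U" | "sp (-1) \<omega> \<in> U" | "sp (-2) \<omega> \<in> U" | "sp (-3) \<omega> \<in> U"
      | "sp 0 \<omega> \<notin> U" "sp (-1) \<omega> \<notin> U" "sp (-2) \<omega> \<notin> U" "sp (-3) \<omega> \<notin> U" by blast
    then show ?thesis
    proof cases
      case 1 then show ?thesis by (simp add: sigma_sp K[OF 1])
    next
      case 2 then show ?thesis by (simp add: sigma_sp K[OF 2])
    next
      case 3 then show ?thesis by (simp add: sigma_sp K[OF 3])
    next
      case 4 then show ?thesis by (simp add: sigma_sp K[OF 4])
    next
      case 5 then show ?thesis by (simp add: sigma_sp)
    qed
  qed
  then show "((sigma U \<circ> sigma {\<omega>. sp (-1) \<omega> \<in> U}) \<circ> (sigma U \<circ> sigma {\<omega>. sp (-1) \<omega> \<in> U})) \<omega> = id \<omega>" by (simp add: sp0)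
qed

lemma inv3: "f \<circ> f \<circ> f = id \<Longrightarrow> inv f = f \<circ> f"
  by (rule inv_unique_comp) (simp_all add: o_assoc)

lemma starl: assumes "sep 4 U"
  shows "sigma {\<omega>. sp (-1) \<omega> \<in> U} = star (sigma U) (sigma {\<omega>. sp (-2) \<omega> \<in> U})"
proof -
  have s2: "sep 2 U" using assms unfolding sep_def by fastforce
  have i1: "inv (sigma U) = sigma U \<circ> sigma U" by (rule inv3[OF cube[OF s2]])
  have i2: "inv (sigma {\<omega>. sp (-2) \<omega> \<in> U}) = sigma {\<omega>. sp (-2) \<omega> \<in> U} \<circ> sigma {\<omega>. sp (-2) \<omega> \<in> U}"
    by (rule inv3[OF cube[OF sep_shift[OF s2]]])
  show ?thesis unfolding star_def i1 i2
  proof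
    fix \<omega> :: "int \<Rightarrow> 'a"
    have K: "\<And>a b. shiftpow a \<omega> \<in> U \<Longrightarrow> a \<noteq> b \<Longrightarrow> \<bar>a - b\<bar> \<le> 4 \<Longrightarrow> shiftpow b \<omega> \<notin> U"
      using sepD[OF assms] by blast
    have "sigma {\<omega>. sp (-1) \<omega> \<in> U} (sp 0 \<omega>) = (sigma {\<omega>. sp (-2) \<omega> \<in> U} \<circ> (sigma U \<circ> sigma U) \<circ>
       (sigma {\<omega>. sp (-2) \<omega> \<in> U} \<circ> sigma {\<omega>. sp (-2) \<omega> \<in> U}) \<circ> sigma U) (sp 0 \<omega>)"
    proof -
      consider "sp 0 \<omega> \<in> U" | "sp (-1) \<omega> \<in> U" | "sp (-2) \<omega> \<in> U" | "sp (-3) \<omega> \<in> U" | "sp (-4) \<omega> \<in> U"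
        | "sp 0 \<omega> \<notin> U" "sp (-1) \<omega> \<notin> U" "sp (-2) \<omega> \<notin> U" "sp (-3) \<omega> \<notin> U" "sp (-4) \<omega> \<notin> U" by blast
      then show ?thesis
      proof cases
        case 1 then show ?thesis by (simp add: sigma_sp K[OF 1])
      next
        case 2 then show ?thesis by (simp add: sigma_sp K[OF 2])
      next
        case 3 then show ?thesis by (simp add: sigma_sp K[OF 3])
      next
        case 4 then show ?thesis by (simp add: sigma_sp K[OF 4])
      next
        case 5 then show ?thesis by (simp add: sigma_sp K[OF 5])
      next
        case 6 then show ?thesis by (simp add: sigma_sp)
      qed
    qed
    then show "sigma {\<omega>. sp (-1) \<omega> \<in> U} \<omega> = (sigma {\<omega>. sp (-2) \<omega> \<in> U} \<circ> (sigma U \<circ> sigma U) \<circ>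
       (sigma {\<omega>. sp (-2) \<omega> \<in> U} \<circ> sigma {\<omega>. sp (-2) \<omega> \<in> U}) \<circ> sigma U) \<omega>" by (simp add: sp0)
  qed
qed

lemma comp: assumes "sep 2 (A \<union> B)" "A \<inter> B = {}"
  shows "sigma A \<circ> sigma B = sigma (A \<union> B)"
proof
  fix \<omega> :: "int \<Rightarrow> 'a"
  have K: "\<And>a b. shiftpow a \<omega> \<in> A \<union> B \<Longrightarrow> a \<noteq> b \<Longrightarrow> \<bar>a - b\<bar> \<le> 2 \<Longrightarrow> shiftpow b \<omega> \<notin> A \<and> shiftpow b \<omega> \<notin> B"
    using sepD[OF assms(1)] by blast
  have DA: "\<And>a. shiftpow a \<omega> \<in> B \<Longrightarrow> shiftpow a \<omega> \<notin> A" "\<And>a. shiftpow a \<omega> \<in> A \<Longrightarrow> shiftpow a \<omega> \<notin> B"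
    using assms(2) by blast+
  have "(sigma A \<circ> sigma B) (sp 0 \<omega>) = sigma (A \<union> B) (sp 0 \<omega>)"
  proof -
    consider "sp 0 \<omega> \<in> B" | "sp (-1) \<omega> \<in> B" | "sp (-2) \<omega> \<in> B"
      | "sp 0 \<omega> \<in> A" | "sp (-1) \<omega> \<in> A" | "sp (-2) \<omega> \<in> A"
      | "sp 0 \<omega> \<notin> A \<union> B" "sp (-1) \<omega> \<notin> A \<union> B" "sp (-2) \<omega> \<notin> A \<union> B" by blast
    then show ?thesis
    proof cases
      case 1 then show ?thesis by (simp add: sigma_sp K[OF UnI2[OF 1]] DA(1)[OF 1])
    next
      case 2 then show ?thesis by (simp add: sigma_sp K[OF UnI2[OF 2]] DA(1)[OF 2])
    next
      case 3 then show ?thesis by (simp add: sigma_sp K[OF UnI2[OF 3]] DA(1)[OF 3])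
    next
      case 4 then show ?thesis by (simp add: sigma_sp K[OF UnI1[OF 4]] DA(2)[OF 4])
    next
      case 5 then show ?thesis by (simp add: sigma_sp K[OF UnI1[OF 5]] DA(2)[OF 5])
    next
      case 6 then show ?thesis by (simp add: sigma_sp K[OF UnI1[OF 6]] DA(2)[OF 6])
    next
      case 7 then show ?thesis by (simp add: sigma_sp)
    qed
  qed
  then show "(sigma A \<circ> sigma B) \<omega> = sigma (A \<union> B) \<omega>" by (simp add: sp0)
qed

lemma sigma_empty: "sigma {} = id"
  by (simp add: fun_eq_iff sigma_def)

lemma foldr_sigma:
  "sep 2 U \<Longrightarrow> (\<forall>c\<in>set L. c \<subseteq> U) \<Longrightarrow>
   (\<forall>p<length L. \<forall>q<length L. p \<noteq> q \<longrightarrow> L!p \<inter> L!q = {}) \<Longrightarrow>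
   foldr (\<circ>) (map sigma L) id = sigma (\<Union>(set L))"
proof (induction L)
  case Nil then show ?case by (simp add: sigma_empty)
next
  case (Cons A L)
  have IH: "foldr (\<circ>) (map sigma L) id = sigma (\<Union>(set L))"
  proof (rule Cons.IH[OF Cons.prems(1)])
    show "\<forall>c\<in>set L. c \<subseteq> U" using Cons.prems(2) by simp
    show "\<forall>p<length L. \<forall>q<length L. p \<noteq> q \<longrightarrow> L!p \<inter> L!q = {}"
    proof (intro allI impI)
      fix p q assume "p < length L" "q < length L" "p \<noteq> q"
      then show "L!p \<inter> L!q = {}" using Cons.prems(3)[rule_format, of "Suc p" "Suc q"] by simp
    qed
  qed
  have d: "A \<inter> \<Union>(set L) = {}"
  proof -
    have "A \<inter> L!q = {}" if "q < length L" for q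
      using Cons.prems(3)[rule_format, of 0 "Suc q"] that by simp
    then show ?thesis by (force simp: in_set_conv_nth)
  qed
  have s: "sep 2 (A \<union> \<Union>(set L))"
    by (rule sep_mono[OF Cons.prems(1)]) (use Cons.prems(2) in auto)
  have "foldr (\<circ>) (map sigma (A # L)) id = sigma A \<circ> foldr (\<circ>) (map sigma L) id" by simp
  then show ?case using comp[OF s d] IH by (simp only: list.set Union_insert)
qed

lemma td_pt: assumes "three_disjoint U V" "sp a \<omega> \<in> U" "sp b \<omega> \<in> V" "\<bar>a - b\<bar> \<le> 2"
  shows False
proof -
  define c where "c = max a b"
  have inU: "X \<in> U \<union> shift ` U \<union> shift ` shift ` U \<longleftrightarrow> sp 0 X \<in> U \<or> sp (-1) X \<in> U \<or> sp (-2) X \<in> U" for X U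
    by (simp add: mem_shift_img mem_shift2 sp0)
  have "sp c \<omega> \<in> U \<union> shift ` U \<union> shift ` shift ` U"
  proof -
    define d where "d = a - c"
    have h: "sp d (sp c \<omega>) \<in> U" using assms(2) by (simp add: d_def)
    have r: "d = 0 \<or> d = -1 \<or> d = -2" using assms(4) by (auto simp: d_def c_def max_def)
    show ?thesis unfolding inU using h r by (elim disjE) (simp_all add: sp0)
  qed
  moreover have "sp c \<omega> \<in> V \<union> shift ` V \<union> shift ` shift ` V"
  proof -
    define d where "d = b - c"
    have h: "sp d (sp c \<omega>) \<in> V" using assms(3) by (simp add: d_def)
    have r: "d = 0 \<or> d = -1 \<or> d = -2" using assms(4) by (auto simp: d_def c_def max_def)
    show ?thesis unfolding inU using h r by (elim disjE) (simp_all add: sp0)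
  qed
  ultimately show False using assms(1) unfolding three_disjoint_def by blast
qed

lemma commute: assumes "three_disjoint U V" "sep 2 U" "sep 2 V"
  shows "commutator (sigma U) (sigma V) = id"
proof -
  have s: "sep 2 (U \<union> V)" unfolding sep_def
  proof (intro allI impI)
    fix a b \<omega> assume a: "sp a \<omega> \<in> U \<union> V" "sp b \<omega> \<in> U \<union> V"
    show "a = b \<or> 2 < \<bar>a - b\<bar>"
    proof (rule ccontr)
      assume n: "\<not> (a = b \<or> 2 < \<bar>a - b\<bar>)"
      then have n1: "a \<noteq> b" and n2: "\<bar>a - b\<bar> \<le> 2" by auto
      have n3: "\<bar>b - a\<bar> \<le> 2" using n2 by linarith
      show False using a
      proof (elim UnE)
        assume "sp a \<omega> \<in> U" "sp b \<omega> \<in> U" then show False using sepD[OF assms(2) _ n1 n2] by blast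
      next
        assume "sp a \<omega> \<in> V" "sp b \<omega> \<in> V" then show False using sepD[OF assms(3) _ n1 n2] by blast
      next
        assume "sp a \<omega> \<in> U" "sp b \<omega> \<in> V" then show False using td_pt[OF assms(1) _ _ n2] by blast
      next
        assume "sp a \<omega> \<in> V" "sp b \<omega> \<in> U" then show False using td_pt[OF assms(1) _ _ n3] by blast
      qed
    qed
  qed
  have d: "U \<inter> V = {}"
  proof (rule ccontr)
    assume "U \<inter> V \<noteq> {}" then obtain x where "sp 0 x \<in> U" "sp 0 x \<in> V" by (auto simp: sp0)
    then show False using td_pt[OF assms(1), of 0 x 0] by simp
  qed
  have c1: "sigma U \<circ> sigma V = sigma V \<circ> sigma U"
    using comp[OF s d] comp[of V U] s d by (simp add: Un_commute Int_commute)
  have cu: "sigma U \<circ> sigma U \<circ> sigma U = id" "sigma V \<circ> sigma V \<circ> sigma V = id"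
    using cube assms(2,3) by blast+
  have "commutator (sigma U) (sigma V) = sigma V \<circ> (sigma U \<circ> sigma U \<circ> sigma U) \<circ> sigma V \<circ> sigma V"
    unfolding commutator_def inv3[OF cu(1)] inv3[OF cu(2)] c1 by (simp add: o_assoc)
  also have "\<dots> = id" using cu by (simp add: o_assoc)
  finally show ?thesis .
qed


lemma Omega_m1: assumes "minimal_subshift \<Omega>" shows "sp (-1) \<omega> \<in> \<Omega> \<longleftrightarrow> \<omega> \<in> \<Omega>"
proof -
  have "shift ` \<Omega> = \<Omega>" using assms unfolding minimal_subshift_def by blast
  then have "\<omega> \<in> \<Omega> \<longleftrightarrow> \<omega> \<in> shift ` \<Omega>" by simp
  then show ?thesis by (simp add: mem_shift_img)
qed

lemma cyl_shift1: assumes "minimal_subshift \<Omega>"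
  shows "cyl \<Omega> w (i + 1) = {\<omega>. sp (-1) \<omega> \<in> cyl \<Omega> w i}"
proof -
  have e: "\<And>\<omega> (k::nat). sp (-1) \<omega> (int k - i) = \<omega> (int k - (i + 1))"
    by (simp add: shiftpow_def algebra_simps)
  show ?thesis unfolding cyl_def using Omega_m1[OF assms] by (auto simp: shiftpow_def algebra_simps)
qed

lemma cyl_shift2: assumes "minimal_subshift \<Omega>"
  shows "cyl \<Omega> w (i + 2) = {\<omega>. sp (-2) \<omega> \<in> cyl \<Omega> w i}"
proof -
  have "cyl \<Omega> w (i + 2) = cyl \<Omega> w ((i + 1) + 1)" by (simp add: add.assoc)
  also have "\<dots> = {\<omega>. sp (-1) \<omega> \<in> cyl \<Omega> w (i+1)}" by (rule cyl_shift1[OF assms])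
  also have "\<dots> = {\<omega>. sp (-2) \<omega> \<in> cyl \<Omega> w i}" by (simp add: cyl_shift1[OF assms])
  finally show ?thesis .
qed

lemma cyl_helper:
  assumes d: "\<forall>u\<in>lang_n \<Omega> 5. distinct u" and w: "w \<noteq> []"
    and h: "\<eta> \<in> cyl \<Omega> w i" "sp n \<eta> \<in> cyl \<Omega> w i" and n: "1 \<le> n" "n \<le> 4"
  shows False
proof -
  have o: "\<eta> \<in> \<Omega>" using h(1) by (simp add: cyl_def)
  have e1: "\<eta> (- i) = w ! 0" using h(1) w unfolding cyl_def by force
  have e2: "\<eta> (- i + n) = w ! 0" using h(2) w unfolding cyl_def shiftpow_def by (force simp: algebra_simps)
  define u where "u = map (\<lambda>k. \<eta> (- i + int k)) [0..<5]"
  have "u \<in> lang \<Omega>" unfolding lang_def mem_Collect_eq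
    by (rule bexI[OF _ o], rule exI[of _ "-i"]) (simp add: u_def)
  then have "u \<in> lang_n \<Omega> 5" unfolding lang_n_def by (simp add: u_def)
  then have du: "distinct u" using d by blast
  have "nat n < 5" "nat n \<noteq> 0" using n by auto
  moreover have len: "length u = 5" by (simp add: u_def)
  ultimately have "u ! 0 \<noteq> u ! nat n" using nth_eq_iff_index_eq[OF du, of 0 "nat n"] by simp
  moreover have "u ! 0 = \<eta> (- i)" by (simp add: u_def)
  moreover have "u ! nat n = \<eta> (- i + n)" using \<open>nat n < 5\<close> n by (simp add: u_def)
  ultimately show False using e1 e2 by simp
qed

lemma cyl_sep:
  assumes d: "\<forall>u\<in>lang_n \<Omega> 5. distinct u" and w: "w \<noteq> []"
  shows "sep 4 (cyl \<Omega> w i)"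
  unfolding sep_def
proof (intro allI impI)
  fix a b \<omega> assume a: "sp a \<omega> \<in> cyl \<Omega> w i" "sp b \<omega> \<in> cyl \<Omega> w i"
  show "a = b \<or> 4 < \<bar>a - b\<bar>"
  proof (rule ccontr)
    assume n: "\<not> (a = b \<or> 4 < \<bar>a - b\<bar>)"
    show False
    proof (cases "a < b")
      case True
      have "sp (b - a) (sp a \<omega>) \<in> cyl \<Omega> w i" using a by simp
      then show False using cyl_helper[OF d w a(1), of "b - a"] n True by auto
    next
      case False
      have "sp (a - b) (sp b \<omega>) \<in> cyl \<Omega> w i" using a by simp
      then show False using cyl_helper[OF d w a(2), of "a - b"] n False by auto
    qed
  qed
qed

theorem corollary3p6:
  fixes \<Omega> :: "(int \<Rightarrow> 'a::finite) set"
  assumes "minimal_subshift \<Omega>"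
    and "\<forall>u\<in>lang_n \<Omega> 5. distinct u"
  shows "\<forall>w\<in>lang \<Omega>. \<forall>v\<in>lang \<Omega>. \<forall>i j::int. w \<noteq> [] \<longrightarrow> v \<noteq> [] \<longrightarrow>
     sigma_cyl \<Omega> w i \<circ> sigma_cyl \<Omega> w i \<circ> sigma_cyl \<Omega> w i = id \<and>
     (sigma_cyl \<Omega> w i \<circ> sigma_cyl \<Omega> w (i + 1)) \<circ> (sigma_cyl \<Omega> w i \<circ> sigma_cyl \<Omega> w (i + 1)) = id \<and>
     sigma_cyl \<Omega> w (i + 1) = star (sigma_cyl \<Omega> w i) (sigma_cyl \<Omega> w (i + 2)) \<and>
     (\<forall>C. cylinder_partition \<Omega> C w i \<longrightarrow>
        sigma_cyl \<Omega> w i = foldr (\<circ>) (map (\<lambda>(s, k). sigma_cyl \<Omega> s k) C) id) \<and>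
     (three_disjoint (cyl \<Omega> w i) (cyl \<Omega> v j) \<longrightarrow>
        commutator (sigma_cyl \<Omega> w i) (sigma_cyl \<Omega> v j) = id)"
proof (intro ballI allI impI conjI)
  fix w v :: "'a list" and i j :: int assume w: "w \<noteq> []" and v: "v \<noteq> []"
  have s4: "sep 4 (cyl \<Omega> w i)" by (rule cyl_sep[OF assms(2) w])
  have s2: "sep 2 (cyl \<Omega> w i)" using s4 unfolding sep_def by fastforce
  have sv2: "sep 2 (cyl \<Omega> v j)" using cyl_sep[OF assms(2) v, of j] unfolding sep_def by fastforce
  show "sigma_cyl \<Omega> w i \<circ> sigma_cyl \<Omega> w i \<circ> sigma_cyl \<Omega> w i = id"
    unfolding sigma_cyl_def by (rule cube[OF s2])
  show "(sigma_cyl \<Omega> w i \<circ> sigma_cyl \<Omega> w (i + 1)) \<circ> (sigma_cyl \<Omega> w i \<circ> sigma_cyl \<Omega> w (i + 1)) = id"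
    unfolding sigma_cyl_def cyl_shift1[OF assms(1)] by (rule sq[OF s4])
  show "sigma_cyl \<Omega> w (i + 1) = star (sigma_cyl \<Omega> w i) (sigma_cyl \<Omega> w (i + 2))"
    unfolding sigma_cyl_def cyl_shift1[OF assms(1)] cyl_shift2[OF assms(1)] by (rule starl[OF s4])
  show "three_disjoint (cyl \<Omega> w i) (cyl \<Omega> v j) \<Longrightarrow>
        commutator (sigma_cyl \<Omega> w i) (sigma_cyl \<Omega> v j) = id"
    unfolding sigma_cyl_def by (rule commute[OF _ s2 sv2])
  fix C assume C: "cylinder_partition \<Omega> C w i"
  define L where "L = map (\<lambda>(s, k). cyl \<Omega> s k) C"
  have m: "map (\<lambda>(s, k). sigma_cyl \<Omega> s k) C = map sigma L"
    unfolding L_def sigma_cyl_def by auto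
  have U: "\<Union>(set L) = cyl \<Omega> w i"
    using C unfolding cylinder_partition_def L_def by (auto simp: case_prod_beta)
  have sub: "\<forall>c\<in>set L. c \<subseteq> cyl \<Omega> w i" using U by blast
  have dis: "\<forall>p<length L. \<forall>q<length L. p \<noteq> q \<longrightarrow> L!p \<inter> L!q = {}"
    using C unfolding cylinder_partition_def L_def by (auto simp: case_prod_beta)
  have "foldr (\<circ>) (map (\<lambda>(s, k). sigma_cyl \<Omega> s k) C) id = foldr (\<circ>) (map sigma L) id"
    by (simp only: m)
  also have "\<dots> = sigma (\<Union>(set L))" by (rule foldr_sigma[OF s2 sub dis])
  also have "\<dots> = sigma_cyl \<Omega> w i" by (simp add: U sigma_cyl_def)
  finally show "sigma_cyl \<Omega> w i = foldr (\<circ>) (map (\<lambda>(s, k). sigma_cyl \<Omega> s k) C) id" by (rule sym)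
qed

end
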